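(* Let $n\ge 2$, $h=1/n$, $\Omega=(0,1)^2$, $f$ continuous on $[0,1]^2$, $g\in H^{1/2}(\partial\Omega)$. (i) For every $\kappa>0$, the seven-point finite difference scheme described in the context has exactly one solution $\{u_{k,\ell}\}$. (ii) The five-point scheme described in the context has exactly one solution. (iii) If in addition $f\le 0$ in $\Omega$, then for every $0<\kappa\le 4$ the solution of the seven-point scheme (and in particular the solution of the five-point scheme) satisfies $\max_{(x_k,y_\ell)\in\Omega_h}u_{k,\ell}\le\max_{(x_k,y_\ell)\in\partial\Omega_h}Q_bg(x_k,y_\ell)$, where $\Omega_h$ is the set of all grid points and $\partial\Omega_h$ the set of boundary grid points.
   Context: Grid: $x_k=(k-\frac12)h$, $y_\ell=(\ell-\frac12)h$ for $k,\ell\in\{\frac12,1,\frac32,\dots,n+\frac12\}$. Grid points are $(x_k,y_\ell)$ with one index an integer in $\{1,\dots,n\}$ and the other a half-integer in $\{\frac12,\dots,n+\frac12\}$ (midpoints of the edges of the uniform square partition); a grid point is a boundary grid point if its half-integer index is $\frac12$ or $n+\frac12$. $Q_bg$ at a boundary grid point is the average of $g$ over the boundary edge of length $h$ centered at that point. Seven-point scheme (parameter $\kappa>0$): unknowns $u_{k,\ell}$ at all grid points with $u_{k,\ell}=Q_bg(x_k,y_\ell)$ at boundary grid points, and $c_1u_{i+\frac32,j}+c_2u_{i+\frac12,j}+c_3u_{i-\frac12,j}+c_4(u_{i+1,j-\frac12}+u_{i+1,j+\frac12}+u_{i,j-\frac12}+u_{i,j+\frac12})=\frac{h^2}{2}f(x_{i+\frac12},y_j)$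 for $i\in\{1,\dots,n-1\}$, $j\in\{1,\dots,n\}$, $c_1u_{i,j+\frac32}+c_2u_{i,j+\frac12}+c_3u_{i,j-\frac12}+c_4(u_{i-\frac12,j+1}+u_{i+\frac12,j+1}+u_{i-\frac12,j}+u_{i+\frac12,j})=\frac{h^2}{2}f(x_i,y_{j+\frac12})$ for $i\in\{1,\dots,n\}$, $j\in\{1,\dots,n-1\}$, with $c_1=c_3=\frac{\kappa}{4}-1$, $c_2=\frac{\kappa}{2}+2$, $c_4=-\frac{\kappa}{4}$. Five-point scheme: the case $\kappa=4$, i.e. the same boundary condition and $\frac{4u_{i+\frac12,j}-u_{i+1,j-\frac12}-u_{i+1,j+\frac12}-u_{i,j-\frac12}-u_{i,j+\frac12}}{h^2}=\frac12f(x_{i+\frac12},y_j)$, $\frac{4u_{i,j+\frac12}-u_{i-\frac12,j+1}-u_{i+\frac12,j+1}-u_{i-\frac12,j}-u_{i+\frac12,j}}{h^2}=\frac12f(x_i,y_{j+\frac12})$ for the same index ranges. *)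

theory Defs
  imports "HOL-Analysis.Analysis"
begin

text \<open>Index convention: a grid index k in {1/2, 1, 3/2, ..., n+1/2} is represented by the
  natural number K = 2k in {1, ..., 2n+1}.  So x_k = (k - 1/2) h = (K - 1) h / 2.
  A grid point has one integer index (K even) and one half-integer index (K odd).\<close>

definition grid :: "nat \<Rightarrow> (nat \<times> nat) set" where
  "grid n = {(K, L). 1 \<le> K \<and> K \<le> 2*n+1 \<and> 1 \<le> L \<and> L \<le> 2*n+1 \<and> odd (K + L)}"

definition bdry_grid :: "nat \<Rightarrow> (nat \<times> nat) set" where
  "bdry_grid n = {(K, L) \<in> grid n.
      (odd K \<and> (K = 1 \<or> K = 2*n+1)) \<or> (odd L \<and> (L = 1 \<or> L = 2*n+1))}"

definition coord :: "nat \<Rightarrow> nat \<Rightarrow> real" where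
  "coord n K = (real K - 1) / (2 * real n)"

definition Qb :: "nat \<Rightarrow> (real \<times> real \<Rightarrow> real) \<Rightarrow> nat \<times> nat \<Rightarrow> real" where
  "Qb n g p = (case p of (K, L) \<Rightarrow>
     if odd K then
       real n * integral {coord n L - 1 / (2 * real n) .. coord n L + 1 / (2 * real n)}
                   (\<lambda>t. g (coord n K, t))
     else
       real n * integral {coord n K - 1 / (2 * real n) .. coord n K + 1 / (2 * real n)}
                   (\<lambda>t. g (t, coord n L)))"

definition seven_point :: "nat \<Rightarrow> real \<Rightarrow> (real \<times> real \<Rightarrow> real) \<Rightarrow> (real \<times> real \<Rightarrow> real)
    \<Rightarrow> (nat \<times> nat \<Rightarrow> real) \<Rightarrow> bool" where
  "seven_point n \<kappa> f g u \<longleftrightarrow>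
    (let h = 1 / real n; c1 = \<kappa>/4 - 1; c2 = \<kappa>/2 + 2; c3 = \<kappa>/4 - 1; c4 = - \<kappa>/4 in
     (\<forall>p \<in> bdry_grid n. u p = Qb n g p) \<and>
     (\<forall>i \<in> {1..n-1}. \<forall>j \<in> {1..n}.
        c1 * u (2*i+3, 2*j) + c2 * u (2*i+1, 2*j) + c3 * u (2*i-1, 2*j)
        + c4 * (u (2*i+2, 2*j-1) + u (2*i+2, 2*j+1) + u (2*i, 2*j-1) + u (2*i, 2*j+1))
        = h^2 / 2 * f (coord n (2*i+1), coord n (2*j))) \<and>
     (\<forall>i \<in> {1..n}. \<forall>j \<in> {1..n-1}.
        c1 * u (2*i, 2*j+3) + c2 * u (2*i, 2*j+1) + c3 * u (2*i, 2*j-1)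
        + c4 * (u (2*i-1, 2*j+2) + u (2*i+1, 2*j+2) + u (2*i-1, 2*j) + u (2*i+1, 2*j))
        = h^2 / 2 * f (coord n (2*i), coord n (2*j+1))))"

definition five_point :: "nat \<Rightarrow> (real \<times> real \<Rightarrow> real) \<Rightarrow> (real \<times> real \<Rightarrow> real)
    \<Rightarrow> (nat \<times> nat \<Rightarrow> real) \<Rightarrow> bool" where
  "five_point n f g u \<longleftrightarrow>
    (let h = 1 / real n in
     (\<forall>p \<in> bdry_grid n. u p = Qb n g p) \<and>
     (\<forall>i \<in> {1..n-1}. \<forall>j \<in> {1..n}.
        (4 * u (2*i+1, 2*j) - u (2*i+2, 2*j-1) - u (2*i+2, 2*j+1) - u (2*i, 2*j-1) - u (2*i, 2*j+1))
          / h^2 = 1/2 * f (coord n (2*i+1), coord n (2*j))) \<and>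
     (\<forall>i \<in> {1..n}. \<forall>j \<in> {1..n-1}.
        (4 * u (2*i, 2*j+1) - u (2*i-1, 2*j+2) - u (2*i+1, 2*j+2) - u (2*i-1, 2*j) - u (2*i+1, 2*j))
          / h^2 = 1/2 * f (coord n (2*i), coord n (2*j+1))))"

end

theory Submission
  imports Defs "Jordan_Normal_Form.Determinant"
begin

definition Lop :: "real \<Rightarrow> (nat \<times> nat \<Rightarrow> real) \<Rightarrow> nat \<times> nat \<Rightarrow> real" where
  "Lop \<kappa> u p = (case p of (K, L) \<Rightarrow> if odd K then
     (\<kappa>/4 - 1) * u (K+2, L) + (\<kappa>/2 + 2) * u (K, L) + (\<kappa>/4 - 1) * u (K-2, L)
       + (- \<kappa>/4) * (u (K+1, L-1) + u (K+1, L+1) + u (K-1, L-1) + u (K-1, L+1))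
   else
     (\<kappa>/4 - 1) * u (K, L+2) + (\<kappa>/2 + 2) * u (K, L) + (\<kappa>/4 - 1) * u (K, L-2)
       + (- \<kappa>/4) * (u (K-1, L+1) + u (K+1, L+1) + u (K-1, L-1) + u (K+1, L-1)))"

definition ipts :: "nat \<Rightarrow> (nat \<times> nat) set" where
  "ipts n = grid n - bdry_grid n"

definition rhs :: "nat \<Rightarrow> (real \<times> real \<Rightarrow> real) \<Rightarrow> nat \<times> nat \<Rightarrow> real" where
  "rhs n f p = (case p of (K, L) \<Rightarrow> (1 / real n)^2 / 2 * f (coord n K, coord n L))"

lemma Lop_vv:
  assumes "1 \<le> i" "1 \<le> j"
  shows "Lop \<kappa> w (2*i+1, 2*j) = (\<kappa>/4-1)*w(2*(i+1)+1, 2*j) + (\<kappa>/2+2)*w(2*i+1,2*j)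
     + (\<kappa>/4-1)*w(2*(i-1)+1, 2*j) + (-\<kappa>/4)*(w(2*(i+1), 2*(j-1)+1) + w(2*(i+1), 2*j+1)
     + w(2*i, 2*(j-1)+1) + w(2*i,2*j+1))"
proof -
  have e: "2*i+1+2 = 2*(i+1)+1" "2*i+1-2 = 2*(i-1)+1" "2*i+1+1 = 2*(i+1)" "2*j-1 = 2*(j-1)+1"
    "2*i+1-1 = 2*i" using assms by auto
  have o: "odd (2*i+1)" by simp
  show ?thesis unfolding Lop_def prod.case if_P[OF o] e by (rule refl)
qed

lemma Lop_hh:
  assumes "1 \<le> i" "1 \<le> j"
  shows "Lop \<kappa> w (2*i, 2*j+1) = (\<kappa>/4-1)*w(2*i, 2*(j+1)+1) + (\<kappa>/2+2)*w(2*i,2*j+1)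
     + (\<kappa>/4-1)*w(2*i, 2*(j-1)+1) + (-\<kappa>/4)*(w(2*(i-1)+1, 2*(j+1)) + w(2*i+1, 2*(j+1))
     + w(2*(i-1)+1, 2*j) + w(2*i+1, 2*j))"
proof -
  have e: "2*j+1+2 = 2*(j+1)+1" "2*j+1-2 = 2*(j-1)+1" "2*j+1+1 = 2*(j+1)" "2*i-1 = 2*(i-1)+1"
    "2*j+1-1 = 2*j" using assms by auto
  have o: "\<not> odd (2*i)" by simp
  show ?thesis unfolding Lop_def prod.case if_not_P[OF o] e by (rule refl)
qed

lemma Lop_v7:
  assumes "1 \<le> i"
  shows "Lop \<kappa> u (2*i+1, 2*j) = (\<kappa>/4 - 1) * u (2*i+3, 2*j) + (\<kappa>/2 + 2) * u (2*i+1, 2*j) + (\<kappa>/4 - 1) * u (2*i-1, 2*j)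
        + (- \<kappa>/4) * (u (2*i+2, 2*j-1) + u (2*i+2, 2*j+1) + u (2*i, 2*j-1) + u (2*i, 2*j+1))"
proof -
  have e: "2*i+1+2 = 2*i+3" "2*i+1-2 = 2*i-1" "2*i+1+1 = 2*i+2" 
    "2*i+1-1 = 2*i" using assms by auto
  have o: "odd (2*i+1)" by simp
  show ?thesis unfolding Lop_def prod.case if_P[OF o] e by (rule refl)
qed

lemma Lop_h7:
  assumes "1 \<le> j"
  shows "Lop \<kappa> u (2*i, 2*j+1) = (\<kappa>/4 - 1) * u (2*i, 2*j+3) + (\<kappa>/2 + 2) * u (2*i, 2*j+1) + (\<kappa>/4 - 1) * u (2*i, 2*j-1)
        + (- \<kappa>/4) * (u (2*i-1, 2*j+2) + u (2*i+1, 2*j+2) + u (2*i-1, 2*j) + u (2*i+1, 2*j))"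
proof -
  have e: "2*j+1+2 = 2*j+3" "2*j+1-2 = 2*j-1" "2*j+1+1 = 2*j+2" 
    "2*j+1-1 = 2*j" using assms by auto
  have o: "\<not> odd (2*i)" by simp
  show ?thesis unfolding Lop_def prod.case if_not_P[OF o] e by (rule refl)
qed

lemma grid_v: "i \<le> n \<Longrightarrow> 1 \<le> j \<Longrightarrow> j \<le> n \<Longrightarrow> (2*i+1, 2*j) \<in> grid n"
  unfolding grid_def by auto
lemma grid_h: "1 \<le> i \<Longrightarrow> i \<le> n \<Longrightarrow> j \<le> n \<Longrightarrow> (2*i, 2*j+1) \<in> grid n"
  unfolding grid_def by auto
lemma bdry_v: "1 \<le> j \<Longrightarrow> j \<le> n \<Longrightarrow> (1, 2*j) \<in> bdry_grid n \<and> (2*n+1, 2*j) \<in> bdry_grid n"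
  unfolding bdry_grid_def grid_def by auto
lemma bdry_h: "1 \<le> i \<Longrightarrow> i \<le> n \<Longrightarrow> (2*i, 1) \<in> bdry_grid n \<and> (2*i, 2*n+1) \<in> bdry_grid n"
  unfolding bdry_grid_def grid_def by auto
lemma ipts_v: "1 \<le> i \<Longrightarrow> i+1 \<le> n \<Longrightarrow> 1 \<le> j \<Longrightarrow> j \<le> n \<Longrightarrow> (2*i+1, 2*j) \<in> ipts n"
  unfolding ipts_def bdry_grid_def grid_def by auto
lemma ipts_h: "1 \<le> i \<Longrightarrow> i \<le> n \<Longrightarrow> 1 \<le> j \<Longrightarrow> j+1 \<le> n \<Longrightarrow> (2*i, 2*j+1) \<in> ipts n"
  unfolding ipts_def bdry_grid_def grid_def by auto

lemma grid_cases:
  assumes "p \<in> grid n"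
  obtains i j where "p = (2*i+1, 2*j)" "i \<le> n" "1 \<le> j" "j \<le> n"
  | i j where "p = (2*i, 2*j+1)" "1 \<le> i" "i \<le> n" "j \<le> n"
proof -
  obtain K L where p: "p = (K, L)" by force
  have K: "1 \<le> K" "K \<le> 2*n+1" and L: "1 \<le> L" "L \<le> 2*n+1" and o: "odd (K+L)"
    using assms p unfolding grid_def by auto
  show ?thesis
  proof (cases "odd K")
    case True
    then obtain i where i: "K = 2*i+1" by (metis oddE)
    from True o have "even L" by auto
    then obtain j where j: "L = 2*j" by (metis evenE)
    show ?thesis using that(1)[of i j] p i j K L by auto
  next
    case False
    then obtain i where i: "K = 2*i" by (metis evenE)
    from False o have "odd L" by auto
    then obtain j where j: "L = 2*j+1" by (metis oddE)
    show ?thesis using that(2)[of i j] p i j K L by auto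
  qed
qed

lemma ipts_cases:
  assumes "p \<in> ipts n"
  obtains i j where "p = (2*i+1, 2*j)" "1 \<le> i" "i+1 \<le> n" "1 \<le> j" "j \<le> n"
  | i j where "p = (2*i, 2*j+1)" "1 \<le> i" "i \<le> n" "1 \<le> j" "j+1 \<le> n"
proof -
  have g: "p \<in> grid n" and nb: "p \<notin> bdry_grid n" using assms unfolding ipts_def by auto
  show ?thesis
  proof (cases rule: grid_cases[OF g])
    case (1 i j)
    have "i \<noteq> 0" proof assume "i = 0" with nb 1 bdry_v[of j n] show False by simp qed
    moreover have "i \<noteq> n" proof assume "i = n" with nb 1 bdry_v[of j n] show False by simp qed
    ultimately show ?thesis using that(1)[of i j] 1 by auto
  next
    case (2 i j)
    have "j \<noteq> 0" proof assume "j = 0" with nb 2 bdry_h[of i n] show False by simp qed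
    moreover have "j \<noteq> n" proof assume "j = n" with nb 2 bdry_h[of i n] show False by simp qed
    ultimately show ?thesis using that(2)[of i j] 2 by auto
  qed
qed

lemma bdry_sub: "bdry_grid n \<subseteq> grid n" unfolding bdry_grid_def by auto
lemma finite_grid: "finite (grid n)"
proof -
  have "grid n \<subseteq> {..2*n+1} \<times> {..2*n+1}" unfolding grid_def by auto
  thus ?thesis by (rule finite_subset) auto
qed

lemma rhs_eq: "rhs n f (K,L) = (1/real n)^2/2 * f (coord n K, coord n L)"
  by (simp add: rhs_def)

lemma seven_iff:
 "seven_point n \<kappa> f g u \<longleftrightarrow> (\<forall>p\<in>bdry_grid n. u p = Qb n g p) \<and>
   (\<forall>i\<in>{1..n-1}. \<forall>j\<in>{1..n}. Lop \<kappa> u (2*i+1,2*j) = rhs n f (2*i+1,2*j)) \<and>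
   (\<forall>i\<in>{1..n}. \<forall>j\<in>{1..n-1}. Lop \<kappa> u (2*i,2*j+1) = rhs n f (2*i,2*j+1))"
  unfolding seven_point_def Let_def Ball_def atLeastAtMost_iff
  by (simp only: imp_conjL Lop_v7[symmetric] Lop_h7[symmetric] rhs_eq[symmetric] cong: imp_cong)

lemma ipts_all: "(\<forall>p\<in>ipts n. P p) \<longleftrightarrow> (\<forall>i\<in>{1..n-1}. \<forall>j\<in>{1..n}. P (2*i+1,2*j))
   \<and> (\<forall>i\<in>{1..n}. \<forall>j\<in>{1..n-1}. P (2*i,2*j+1))"
proof (intro iffI conjI ballI)
  fix i j assume "\<forall>p\<in>ipts n. P p" "i \<in> {1..n-1}" "j \<in> {1..n}"
  then show "P (2*i+1,2*j)" using ipts_v[of i n j] by auto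
next
  fix i j assume "\<forall>p\<in>ipts n. P p" "i \<in> {1..n}" "j \<in> {1..n-1}"
  then show "P (2*i,2*j+1)" using ipts_h[of i n j] by auto
next
  fix p assume a: "(\<forall>i\<in>{1..n-1}. \<forall>j\<in>{1..n}. P (2*i+1,2*j))
   \<and> (\<forall>i\<in>{1..n}. \<forall>j\<in>{1..n-1}. P (2*i,2*j+1))" "p \<in> ipts n"
  show "P p" by (rule ipts_cases[OF a(2)]) (use a(1) in auto)
qed

lemma seven_iff2:
 "seven_point n \<kappa> f g u \<longleftrightarrow> (\<forall>p\<in>bdry_grid n. u p = Qb n g p) \<and>
   (\<forall>p\<in>ipts n. Lop \<kappa> u p = rhs n f p)"
  unfolding seven_iff ipts_all ..

lemma five_iff: "n \<ge> 1 \<Longrightarrow> five_point n f g u \<longleftrightarrow> seven_point n 4 f g u"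
  unfolding five_point_def seven_point_def Let_def by (simp add: field_simps)

lemma sbp1_gen:
  fixes a b :: "nat \<Rightarrow> real"
  shows "(\<Sum>i=1..Suc m. (a (i-1) + a i) * b i) = (\<Sum>i=1..<Suc m. a i * (b i + b (i+1))) + a 0 * b 1 + a (Suc m) * b (Suc m)"
proof (induction m)
  case 0 then show ?case by (simp add: algebra_simps)
next
  case (Suc m)
  have "(\<Sum>i=1..Suc (Suc m). (a (i-1) + a i) * b i) = (\<Sum>i=1..Suc m. (a (i-1) + a i) * b i) + (a (Suc m) + a (Suc (Suc m))) * b (Suc (Suc m))"
    by simp
  also have "(\<Sum>i=1..<Suc (Suc m). a i * (b i + b (i+1))) = (\<Sum>i=1..<Suc m. a i * (b i + b (i+1))) + a (Suc m) * (b (Suc m) + b (Suc (Suc m)))"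
    by simp
  ultimately show ?case using Suc by (simp add: algebra_simps)
qed

lemma sbp1:
  fixes a b :: "nat \<Rightarrow> real"
  assumes "1 \<le> m" "a 0 = 0" "a m = 0"
  shows "(\<Sum>i=1..m-1. a i * (b i + b (i+1))) = (\<Sum>i=1..m. (a (i-1) + a i) * b i)"
proof -
  obtain k where m: "m = Suc k" using assms(1) by (cases m) auto
  have "{1..m-1} = {1..<Suc k}" using m by auto
  then show ?thesis using sbp1_gen[of a b k] assms m by simp
qed

lemma sbp2_gen:
  fixes a :: "nat \<Rightarrow> real"
  shows "(\<Sum>i\<in>{1..m}. a i * (2*a i - a(i-1) - a(i+1))) = (\<Sum>i\<le>m. (a(i+1) - a i)^2) + a 0 * (a 1 - a 0) - a (m+1) * (a(m+1) - a m)"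
proof (induction m)
  case 0 then show ?case by (simp add: algebra_simps power2_eq_square)
next
  case (Suc m)
  then show ?case by (simp add: algebra_simps power2_eq_square)
qed

lemma sbp2:
  fixes a :: "nat \<Rightarrow> real"
  assumes "1 \<le> m" "a 0 = 0" "a m = 0"
  shows "(\<Sum>i\<in>{1..m-1}. a i * (2*a i - a(i-1) - a(i+1))) = (\<Sum>i<m. (a(i+1) - a i)^2)"
proof -
  obtain k where m: "m = Suc k" using assms(1) by (cases m) auto
  have "{..<m} = {..k}" using m by auto
  then show ?thesis using sbp2_gen[of a k] assms m by simp
qed

lemma const_from_steps:
  fixes a :: "nat \<Rightarrow> real"
  assumes "\<forall>i<n. a (i+1) = a i"
  shows "\<forall>i\<le>n. a i = a 0"
proof (intro allI impI)
  fix i assume "i \<le> n" then show "a i = a 0"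
    using assms by (induction i) auto
qed

lemma energy:
  fixes v h :: "nat \<Rightarrow> nat \<Rightarrow> real"
  assumes k: "\<kappa> > 0" and n: "n \<ge> 1"
  and bv: "\<forall>j\<in>{1..n}. v 0 j = 0 \<and> v n j = 0"
  and bh: "\<forall>i\<in>{1..n}. h i 0 = 0 \<and> h i n = 0"
  and Lv: "\<forall>i\<in>{1..n-1}. \<forall>j\<in>{1..n}. (\<kappa>/4-1)* v (i+1) j + (\<kappa>/2+2)* v i j + (\<kappa>/4-1)* v (i-1) j
            + (-\<kappa>/4)*(h (i+1) (j-1) + h (i+1) j + h i (j-1) + h i j) = 0"
  and Lh: "\<forall>i\<in>{1..n}. \<forall>j\<in>{1..n-1}. (\<kappa>/4-1)* h i (j+1) + (\<kappa>/2+2)* h i j + (\<kappa>/4-1)* h i (j-1)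
            + (-\<kappa>/4)*(v (i-1) (j+1) + v i (j+1) + v (i-1) j + v i j) = 0"
  shows "(\<forall>i\<le>n. \<forall>j\<in>{1..n}. v i j = 0) \<and> (\<forall>i\<in>{1..n}. \<forall>j\<le>n. h i j = 0)"
proof -
  define D where "D i j = v (i-1) j + v i j - h i (j-1) - h i j" for i j
  define PV where "PV = (\<Sum>j\<in>{1..n}. \<Sum>i<n. (v (i+1) j - v i j)^2)"
  define PH where "PH = (\<Sum>i\<in>{1..n}. \<Sum>j<n. (h i (j+1) - h i j)^2)"
  define DD where "DD = (\<Sum>i\<in>{1..n}. \<Sum>j\<in>{1..n}. D i j * D i j)"
  define X where "X = (\<Sum>j\<in>{1..n}. \<Sum>i\<in>{1..n}. (v (i-1) j + v i j) * D i j)"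
  define Y where "Y = (\<Sum>i\<in>{1..n}. \<Sum>j\<in>{1..n}. (h i (j-1) + h i j) * D i j)"
  have S1: "(\<Sum>j\<in>{1..n}. \<Sum>i\<in>{1..n-1}. v i j * (\<kappa>/4 * (D i j + D (i+1) j) + (2* v i j - v (i-1) j - v (i+1) j))) = 0"
  proof (intro sum.neutral ballI)
    fix j i assume j: "j \<in> {1..n}" and i: "i \<in> {1..n-1}"
    have "\<kappa>/4 * (D i j + D (i+1) j) + (2* v i j - v (i-1) j - v (i+1) j)
      = (\<kappa>/4-1)* v (i+1) j + (\<kappa>/2+2)* v i j + (\<kappa>/4-1)* v (i-1) j
            + (-\<kappa>/4)*(h (i+1) (j-1) + h (i+1) j + h i (j-1) + h i j)"
      unfolding D_def by (simp add: algebra_simps)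
    also have "\<dots> = 0" using Lv i j by blast
    finally show "v i j * (\<kappa>/4 * (D i j + D (i+1) j) + (2* v i j - v (i-1) j - v (i+1) j)) = 0" by simp
  qed
  have S2: "(\<Sum>i\<in>{1..n}. \<Sum>j\<in>{1..n-1}. h i j * (- \<kappa>/4 * (D i j + D i (j+1)) + (2* h i j - h i (j-1) - h i (j+1)))) = 0"
  proof (intro sum.neutral ballI)
    fix j i assume i: "i \<in> {1..n}" and j: "j \<in> {1..n-1}"
    have "- \<kappa>/4 * (D i j + D i (j+1)) + (2* h i j - h i (j-1) - h i (j+1))
      = (\<kappa>/4-1)* h i (j+1) + (\<kappa>/2+2)* h i j + (\<kappa>/4-1)* h i (j-1)
            + (-\<kappa>/4)*(v (i-1) (j+1) + v i (j+1) + v (i-1) j + v i j)"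
      unfolding D_def by (simp add: algebra_simps)
    also have "\<dots> = 0" using Lh i j by blast
    finally show "h i j * (- \<kappa>/4 * (D i j + D i (j+1)) + (2* h i j - h i (j-1) - h i (j+1))) = 0" by simp
  qed
  have S1': "(\<Sum>j\<in>{1..n}. \<Sum>i\<in>{1..n-1}. v i j * (\<kappa>/4 * (D i j + D (i+1) j) + (2* v i j - v (i-1) j - v (i+1) j)))
      = \<kappa>/4 * X + PV"
  proof -
    have "\<And>j. j \<in> {1..n} \<Longrightarrow> (\<Sum>i\<in>{1..n-1}. v i j * (\<kappa>/4 * (D i j + D (i+1) j) + (2* v i j - v (i-1) j - v (i+1) j)))
       = \<kappa>/4 * (\<Sum>i\<in>{1..n}. (v (i-1) j + v i j) * D i j) + (\<Sum>i<n. (v (i+1) j - v i j)^2)"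
    proof -
      fix j assume j: "j \<in> {1..n}"
      have "(\<Sum>i\<in>{1..n-1}. v i j * (\<kappa>/4 * (D i j + D (i+1) j) + (2* v i j - v (i-1) j - v (i+1) j)))
        = \<kappa>/4 * (\<Sum>i\<in>{1..n-1}. v i j * (D i j + D (i+1) j)) + (\<Sum>i\<in>{1..n-1}. v i j * (2* v i j - v (i-1) j - v (i+1) j))"
        unfolding sum_distrib_left sum.distrib[symmetric] by (rule sum.cong) (simp_all add: algebra_simps)
      also have "(\<Sum>i\<in>{1..n-1}. v i j * (D i j + D (i+1) j)) = (\<Sum>i\<in>{1..n}. (v (i-1) j + v i j) * D i j)"
        using sbp1[of n "\<lambda>i. v i j" "\<lambda>i. D i j"] n bv j by simp
      also have "(\<Sum>i\<in>{1..n-1}. v i j * (2* v i j - v (i-1) j - v (i+1) j)) = (\<Sum>i<n. (v (i+1) j - v i j)^2)"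
        using sbp2[of n "\<lambda>i. v i j"] n bv j by simp
      finally show "?thesis j" .
    qed
    then have "(\<Sum>j\<in>{1..n}. \<Sum>i\<in>{1..n-1}. v i j * (\<kappa>/4 * (D i j + D (i+1) j) + (2* v i j - v (i-1) j - v (i+1) j)))
      = (\<Sum>j\<in>{1..n}. \<kappa>/4 * (\<Sum>i\<in>{1..n}. (v (i-1) j + v i j) * D i j) + (\<Sum>i<n. (v (i+1) j - v i j)^2))"
      by (rule sum.cong[OF refl])
    also have "\<dots> = \<kappa>/4 * X + PV" unfolding X_def PV_def by (simp add: sum.distrib sum_distrib_left)
    finally show ?thesis .
  qed
  have S2': "(\<Sum>i\<in>{1..n}. \<Sum>j\<in>{1..n-1}. h i j * (- \<kappa>/4 * (D i j + D i (j+1)) + (2* h i j - h i (j-1) - h i (j+1))))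
      = - \<kappa>/4 * Y + PH"
  proof -
    have "\<And>i. i \<in> {1..n} \<Longrightarrow> (\<Sum>j\<in>{1..n-1}. h i j * (- \<kappa>/4 * (D i j + D i (j+1)) + (2* h i j - h i (j-1) - h i (j+1))))
       = - \<kappa>/4 * (\<Sum>j\<in>{1..n}. (h i (j-1) + h i j) * D i j) + (\<Sum>j<n. (h i (j+1) - h i j)^2)"
    proof -
      fix i assume i: "i \<in> {1..n}"
      have "(\<Sum>j\<in>{1..n-1}. h i j * (- \<kappa>/4 * (D i j + D i (j+1)) + (2* h i j - h i (j-1) - h i (j+1))))
        = - \<kappa>/4 * (\<Sum>j\<in>{1..n-1}. h i j * (D i j + D i (j+1))) + (\<Sum>j\<in>{1..n-1}. h i j * (2* h i j - h i (j-1) - h i (j+1)))"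
        unfolding sum_distrib_left sum.distrib[symmetric] by (rule sum.cong) (simp_all add: algebra_simps)
      also have "(\<Sum>j\<in>{1..n-1}. h i j * (D i j + D i (j+1))) = (\<Sum>j\<in>{1..n}. (h i (j-1) + h i j) * D i j)"
        using sbp1[of n "\<lambda>j. h i j" "\<lambda>j. D i j"] n bh i by simp
      also have "(\<Sum>j\<in>{1..n-1}. h i j * (2* h i j - h i (j-1) - h i (j+1))) = (\<Sum>j<n. (h i (j+1) - h i j)^2)"
        using sbp2[of n "\<lambda>j. h i j"] n bh i by simp
      finally show "?thesis i" .
    qed
    then have "(\<Sum>i\<in>{1..n}. \<Sum>j\<in>{1..n-1}. h i j * (- \<kappa>/4 * (D i j + D i (j+1)) + (2* h i j - h i (j-1) - h i (j+1))))
      = (\<Sum>i\<in>{1..n}. - \<kappa>/4 * (\<Sum>j\<in>{1..n}. (h i (j-1) + h i j) * D i j) + (\<Sum>j<n. (h i (j+1) - h i j)^2))"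
      by (rule sum.cong[OF refl])
    also have "\<dots> = - \<kappa>/4 * Y + PH" unfolding Y_def PH_def by (simp add: sum.distrib sum_distrib_left)
    finally show ?thesis .
  qed
  have XY: "X - Y = DD"
  proof -
    have "X = (\<Sum>i\<in>{1..n}. \<Sum>j\<in>{1..n}. (v (i-1) j + v i j) * D i j)"
      unfolding X_def by (rule sum.swap)
    then have "X - Y = (\<Sum>i\<in>{1..n}. \<Sum>j\<in>{1..n}. (v (i-1) j + v i j) * D i j - (h i (j-1) + h i j) * D i j)"
      unfolding Y_def by (simp add: sum_subtractf)
    also have "\<dots> = DD" unfolding DD_def D_def by (simp add: algebra_simps)
    finally show ?thesis .
  qed
  have tot: "\<kappa>/4 * DD + PV + PH = 0"
  proof -
    have "\<kappa>/4 * X + PV + (- \<kappa>/4 * Y + PH) = 0" using S1 S2 S1' S2' by simp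
    moreover have "\<kappa>/4 * (X - Y) = \<kappa>/4 * X + (- \<kappa>/4 * Y)" by (simp add: field_simps)
    ultimately have "\<kappa>/4 * (X - Y) + PV + PH = 0" by linarith
    then show ?thesis using XY by simp
  qed
  have DD0: "DD \<ge> 0" unfolding DD_def by (intro sum_nonneg) simp
  have PV0: "PV \<ge> 0" unfolding PV_def by (intro sum_nonneg) simp
  have PH0: "PH \<ge> 0" unfolding PH_def by (intro sum_nonneg) simp
  have "\<kappa>/4 * DD \<ge> 0" using k DD0 by simp
  then have PVz: "PV = 0" and PHz: "PH = 0" using tot PV0 PH0 by linarith+
  have stepv: "\<forall>i<n. v (i+1) j = v i j" if j: "j \<in> {1..n}" for j
  proof -
    have "(\<Sum>i<n. (v (i+1) j - v i j)^2) = 0"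
      using PVz unfolding PV_def using sum_nonneg_eq_0_iff[of "{1..n}" "\<lambda>j. \<Sum>i<n. (v (i+1) j - v i j)^2"] j
      by (simp add: sum_nonneg)
    then show ?thesis using sum_nonneg_eq_0_iff[of "{..<n}" "\<lambda>i. (v (i+1) j - v i j)^2"] by simp
  qed
  have steph: "\<forall>j<n. h i (j+1) = h i j" if i: "i \<in> {1..n}" for i
  proof -
    have "(\<Sum>j<n. (h i (j+1) - h i j)^2) = 0"
      using PHz unfolding PH_def using sum_nonneg_eq_0_iff[of "{1..n}" "\<lambda>i. \<Sum>j<n. (h i (j+1) - h i j)^2"] i
      by (simp add: sum_nonneg)
    then show ?thesis using sum_nonneg_eq_0_iff[of "{..<n}" "\<lambda>j. (h i (j+1) - h i j)^2"] by simp
  qed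
  show ?thesis
  proof (intro conjI allI impI ballI)
    fix i j assume "i \<le> n" "j \<in> {1..n}"
    then show "v i j = 0" using const_from_steps[of n "\<lambda>i. v i j"] stepv bv by auto
  next
    fix i j assume "j \<le> n" "i \<in> {1..n}"
    then show "h i j = 0" using const_from_steps[of n "\<lambda>j. h i j"] steph bh by auto
  qed
qed

lemma uniq_grid:
  assumes k: "\<kappa> > 0" and n: "n \<ge> 1" and b: "\<forall>p\<in>bdry_grid n. w p = 0"
    and L: "\<forall>p\<in>ipts n. Lop \<kappa> w p = 0"
  shows "\<forall>p\<in>grid n. w p = 0"
proof -
  define v where "v i j = w (2*i+1, 2*j)" for i j
  define h where "h i j = w (2*i, 2*j+1)" for i j
  have bv: "\<forall>j\<in>{1..n}. v 0 j = 0 \<and> v n j = 0"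
    using b bdry_v unfolding v_def by auto
  have bh: "\<forall>i\<in>{1..n}. h i 0 = 0 \<and> h i n = 0"
    using b bdry_h unfolding h_def by auto
  have Lv: "\<forall>i\<in>{1..n-1}. \<forall>j\<in>{1..n}. (\<kappa>/4-1)* v (i+1) j + (\<kappa>/2+2)* v i j + (\<kappa>/4-1)* v (i-1) j
            + (-\<kappa>/4)*(h (i+1) (j-1) + h (i+1) j + h i (j-1) + h i j) = 0"
  proof (intro ballI)
    fix i j assume i: "i \<in> {1..n-1}" and j: "j \<in> {1..n}"
    have "Lop \<kappa> w (2*i+1,2*j) = (\<kappa>/4-1)* v (i+1) j + (\<kappa>/2+2)* v i j + (\<kappa>/4-1)* v (i-1) j
            + (-\<kappa>/4)*(h (i+1) (j-1) + h (i+1) j + h i (j-1) + h i j)"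
      unfolding v_def h_def by (rule Lop_vv) (use i j in auto)
    moreover have "(2*i+1,2*j) \<in> ipts n" using ipts_v[of i n j] i j by auto
    ultimately show "(\<kappa>/4-1)* v (i+1) j + (\<kappa>/2+2)* v i j + (\<kappa>/4-1)* v (i-1) j
            + (-\<kappa>/4)*(h (i+1) (j-1) + h (i+1) j + h i (j-1) + h i j) = 0" using L by simp
  qed
  have Lh: "\<forall>i\<in>{1..n}. \<forall>j\<in>{1..n-1}. (\<kappa>/4-1)* h i (j+1) + (\<kappa>/2+2)* h i j + (\<kappa>/4-1)* h i (j-1)
            + (-\<kappa>/4)*(v (i-1) (j+1) + v i (j+1) + v (i-1) j + v i j) = 0"
  proof (intro ballI)
    fix i j assume i: "i \<in> {1..n}" and j: "j \<in> {1..n-1}"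
    have "Lop \<kappa> w (2*i,2*j+1) = (\<kappa>/4-1)* h i (j+1) + (\<kappa>/2+2)* h i j + (\<kappa>/4-1)* h i (j-1)
            + (-\<kappa>/4)*(v (i-1) (j+1) + v i (j+1) + v (i-1) j + v i j)"
      unfolding v_def h_def by (rule Lop_hh) (use i j in auto)
    moreover have "(2*i,2*j+1) \<in> ipts n" using ipts_h[of i n j] i j by auto
    ultimately show "(\<kappa>/4-1)* h i (j+1) + (\<kappa>/2+2)* h i j + (\<kappa>/4-1)* h i (j-1)
            + (-\<kappa>/4)*(v (i-1) (j+1) + v i (j+1) + v (i-1) j + v i j) = 0" using L by simp
  qed
  have z: "(\<forall>i\<le>n. \<forall>j\<in>{1..n}. v i j = 0) \<and> (\<forall>i\<in>{1..n}. \<forall>j\<le>n. h i j = 0)"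
    by (rule energy[OF k n bv bh Lv Lh])
  show ?thesis
  proof
    fix p assume "p \<in> grid n"
    then show "w p = 0"
    proof (cases rule: grid_cases)
      case (1 i j) then show ?thesis using z unfolding v_def by auto
    next
      case (2 i j) then show ?thesis using z unfolding h_def by auto
    qed
  qed
qed

lemma key_ineq:
  fixes \<kappa> M xE xW y1 y2 y3 y4 :: real
  assumes k: "0 < \<kappa>" "\<kappa> \<le> 4" and le: "xE \<le> M" "xW \<le> M" "y1 \<le> M" "y2 \<le> M" "y3 \<le> M" "y4 \<le> M"
    and eq: "(\<kappa>/4-1)*xE + (\<kappa>/2+2)*M + (\<kappa>/4-1)*xW + (-\<kappa>/4)*(y1+y2+y3+y4) \<le> 0"
  shows "y2 = M"
proof -
  have a: "(\<kappa>/4-1)*(xE - M) \<ge> 0" by (rule mult_nonpos_nonpos) (use k le in auto)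
  have b: "(\<kappa>/4-1)*(xW - M) \<ge> 0" by (rule mult_nonpos_nonpos) (use k le in auto)
  define s where "s = (M-y1)+(M-y2)+(M-y3)+(M-y4)"
  have "(\<kappa>/4-1)*xE + (\<kappa>/2+2)*M + (\<kappa>/4-1)*xW + (-\<kappa>/4)*(y1+y2+y3+y4)
      = (\<kappa>/4-1)*(xE - M) + (\<kappa>/4-1)*(xW - M) + \<kappa>/4 * s"
    unfolding s_def by (simp add: field_simps)
  then have "\<kappa>/4 * s \<le> 0" using a b eq by linarith
  then have "s \<le> 0" using k by (simp add: mult_le_0_iff)
  then show ?thesis using le unfolding s_def by linarith
qed

lemma finite_bdry: "finite (bdry_grid n)" using finite_subset[OF bdry_sub finite_grid] .

lemma maxp:
  assumes k: "0 < \<kappa>" "\<kappa> \<le> 4" and n: "n \<ge> 1" and L: "\<forall>p\<in>ipts n. Lop \<kappa> u p \<le> 0"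
  shows "\<exists>q\<in>bdry_grid n. \<forall>p\<in>grid n. u p \<le> u q"
proof -
  define M where "M = Max (u ` grid n)"
  have ne: "grid n \<noteq> {}" using grid_v[of 0 n 1] n by auto
  have leM: "\<And>p. p \<in> grid n \<Longrightarrow> u p \<le> M" unfolding M_def using finite_grid by simp
  define S where "S = {p\<in>grid n. u p = M}"
  have finS: "finite S" unfolding S_def using finite_grid by simp
  have neS: "S \<noteq> {}" unfolding S_def M_def using Max_in[of "u ` grid n"] finite_grid ne by fastforce
  define m where "m = Max ((\<lambda>p. fst p + snd p) ` S)"
  obtain q where qS: "q \<in> S" and qm: "fst q + snd q = m"
    using Max_in[of "(\<lambda>p. fst p + snd p) ` S"] finS neS unfolding m_def by fastforce
  have mx: "\<And>p. p \<in> S \<Longrightarrow> fst p + snd p \<le> m" unfolding m_def using finS by simp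
  have qg: "q \<in> grid n" and uq: "u q = M" using qS unfolding S_def by auto
  have "q \<in> bdry_grid n"
  proof (rule ccontr)
    assume "q \<notin> bdry_grid n"
    then have qi: "q \<in> ipts n" using qg unfolding ipts_def by auto
    show False
    proof (cases rule: ipts_cases[OF qi])
      case (1 i j)
      have "Lop \<kappa> u q \<le> 0" using L qi by auto
      then have e: "(\<kappa>/4-1)*u(2*(i+1)+1, 2*j) + (\<kappa>/2+2)*M
         + (\<kappa>/4-1)*u(2*(i-1)+1, 2*j) + (-\<kappa>/4)*(u(2*(i+1), 2*(j-1)+1) + u(2*(i+1), 2*j+1)
         + u(2*i, 2*(j-1)+1) + u(2*i,2*j+1)) \<le> 0"
        using Lop_vv[of i j \<kappa> u] 1 uq by simp
      have g: "(2*(i+1)+1, 2*j) \<in> grid n" "(2*(i-1)+1, 2*j) \<in> grid n"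
        "(2*(i+1), 2*(j-1)+1) \<in> grid n" "(2*(i+1), 2*j+1) \<in> grid n"
        "(2*i, 2*(j-1)+1) \<in> grid n" "(2*i, 2*j+1) \<in> grid n"
        using 1 unfolding grid_def by auto
      have "u (2*(i+1), 2*j+1) = M"
        by (rule key_ineq[OF k leM[OF g(1)] leM[OF g(2)] leM[OF g(3)] leM[OF g(4)] leM[OF g(5)] leM[OF g(6)] e])
      then have "(2*(i+1), 2*j+1) \<in> S" using g unfolding S_def by auto
      then have "2*(i+1) + (2*j+1) \<le> m" using mx by fastforce
      then show False using qm 1 by simp
    next
      case (2 i j)
      have "Lop \<kappa> u q \<le> 0" using L qi by auto
      then have e: "(\<kappa>/4-1)*u(2*i, 2*(j+1)+1) + (\<kappa>/2+2)*M
         + (\<kappa>/4-1)*u(2*i, 2*(j-1)+1) + (-\<kappa>/4)*(u(2*(i-1)+1, 2*(j+1)) + u(2*i+1, 2*(j+1))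
         + u(2*(i-1)+1, 2*j) + u(2*i+1, 2*j)) \<le> 0"
        using Lop_hh[of i j \<kappa> u] 2 uq by simp
      have g: "(2*i, 2*(j+1)+1) \<in> grid n" "(2*i, 2*(j-1)+1) \<in> grid n"
        "(2*(i-1)+1, 2*(j+1)) \<in> grid n" "(2*i+1, 2*(j+1)) \<in> grid n"
        "(2*(i-1)+1, 2*j) \<in> grid n" "(2*i+1, 2*j) \<in> grid n"
        using 2 unfolding grid_def by auto
      have "u (2*i+1, 2*(j+1)) = M"
        by (rule key_ineq[OF k leM[OF g(1)] leM[OF g(2)] leM[OF g(3)] leM[OF g(4)] leM[OF g(5)] leM[OF g(6)] e])
      then have "(2*i+1, 2*(j+1)) \<in> S" using g unfolding S_def by auto
      then have "(2*i+1) + 2*(j+1) \<le> m" using mx by fastforce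
      then show False using qm 2 by simp
    qed
  qed
  then show ?thesis using leM uq by metis
qed

lemma Lop_sum: "finite A \<Longrightarrow> Lop \<kappa> (\<lambda>q. \<Sum>c\<in>A. F c q) p = (\<Sum>c\<in>A. Lop \<kappa> (F c) p)"
  by (cases p) (simp add: Lop_def sum_distrib_left sum.distrib distrib_left sum_subtractf sum_negf)

lemma Lop_scale: "Lop \<kappa> (\<lambda>q. F q * c) p = Lop \<kappa> F p * c"
  by (cases p) (simp add: Lop_def algebra_simps)

lemma Lop_local:
  assumes p: "p \<in> ipts n" and eq: "\<forall>q\<in>grid n. u q = u' q"
  shows "Lop \<kappa> u p = Lop \<kappa> u' p"
proof (cases rule: ipts_cases[OF p])
  case (1 i j)
  have g: "(2*(i+1)+1, 2*j) \<in> grid n" "(2*(i-1)+1, 2*j) \<in> grid n" "(2*i+1, 2*j) \<in> grid n"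
        "(2*(i+1), 2*(j-1)+1) \<in> grid n" "(2*(i+1), 2*j+1) \<in> grid n"
        "(2*i, 2*(j-1)+1) \<in> grid n" "(2*i, 2*j+1) \<in> grid n"
    using 1 unfolding grid_def by auto
  show ?thesis using Lop_vv[of i j \<kappa> u] Lop_vv[of i j \<kappa> u'] 1 eq g by simp
next
  case (2 i j)
  have g: "(2*i, 2*(j+1)+1) \<in> grid n" "(2*i, 2*(j-1)+1) \<in> grid n" "(2*i, 2*j+1) \<in> grid n"
        "(2*(i-1)+1, 2*(j+1)) \<in> grid n" "(2*i+1, 2*(j+1)) \<in> grid n"
        "(2*(i-1)+1, 2*j) \<in> grid n" "(2*i+1, 2*j) \<in> grid n"
    using 2 unfolding grid_def by auto
  show ?thesis using Lop_hh[of i j \<kappa> u] Lop_hh[of i j \<kappa> u'] 2 eq g by simp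
qed

lemma seven_local:
  assumes "seven_point n \<kappa> f g u" "\<forall>q\<in>grid n. u q = u' q"
  shows "seven_point n \<kappa> f g u'"
  unfolding seven_iff2
proof (intro conjI ballI)
  fix p assume p: "p \<in> bdry_grid n"
  then have "p \<in> grid n" using bdry_sub by auto
  then show "u' p = Qb n g p" using assms p unfolding seven_iff2 by auto
next
  fix p assume p: "p \<in> ipts n"
  then show "Lop \<kappa> u' p = rhs n f p" using assms Lop_local[OF p assms(2)] unfolding seven_iff2 by auto
qed

lemma grid_bound: "(K, L) \<in> grid n \<Longrightarrow> K < 2*n+2 \<and> L < 2*n+2"
  unfolding grid_def by auto

lemma exist:
  assumes k: "\<kappa> > 0" and n: "n \<ge> 1"
  shows "\<exists>u. seven_point n \<kappa> f g u"
proof -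
  define S where "S = 2*n+2"
  define N where "N = S*S"
  have S0: "S > 0" unfolding S_def by simp
  define dec where "dec c = (c div S, c mod S)" for c
  define A :: "real mat" where "A = mat N N (\<lambda>(r,c). if dec r \<in> ipts n
      then Lop \<kappa> (\<lambda>q. if q = dec c then 1 else 0) (dec r) else (if c = r then 1 else 0))"
  define b :: "real vec" where "b = vec N (\<lambda>r. if dec r \<in> ipts n then rhs n f (dec r)
      else if dec r \<in> bdry_grid n then Qb n g (dec r) else 0)"
  define pad where "pad x = (\<lambda>(K,L). if K < S \<and> L < S then x $ (K*S+L) else 0)" for x :: "real vec"
  have Acar: "A \<in> carrier_mat N N" unfolding A_def by simp
  have dec_idx: "dec (K*S+L) = (K, L)" if "L < S" for K L
    unfolding dec_def using that S0 by simp
  have idxN: "K*S+L < N" if "K < S" "L < S" for K L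
  proof -
    have "K*S+L < K*S + S" using that by simp
    also have "\<dots> = (K+1)*S" by simp
    also have "\<dots> \<le> S*S" using that by (intro mult_right_mono) auto
    finally show ?thesis unfolding N_def .
  qed
  have padsum: "(\<Sum>c\<in>{0..<N}. (if q = dec c then 1 else 0) * x $ c) = pad x q" for q x
  proof (cases q)
    case (Pair K L)
    show ?thesis
    proof (cases "K < S \<and> L < S")
      case True
      have "\<And>c. (q = dec c) = (c = K*S+L)"
      proof -
        fix c
        show "(q = dec c) = (c = K*S+L)"
        proof
          assume "q = dec c"
          then have "K = c div S" "L = c mod S" using Pair unfolding dec_def by auto
          then show "c = K*S+L" by simp
        next
          assume "c = K*S+L" then show "q = dec c" using dec_idx True Pair by simp
        qed
      qed
      then have "(\<Sum>c\<in>{0..<N}. (if q = dec c then 1 else 0) * x $ c) = (\<Sum>c\<in>{0..<N}. if c = K*S+L then x $ c else 0)"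
        by (intro sum.cong) auto
      also have "\<dots> = x $ (K*S+L)" using idxN True by simp
      finally show ?thesis unfolding pad_def using Pair True by simp
    next
      case False
      have "\<And>c. c \<in> {0..<N} \<Longrightarrow> q \<noteq> dec c"
      proof -
        fix c assume c: "c \<in> {0..<N}"
        have "c div S < S" using c unfolding N_def by (simp add: less_mult_imp_div_less)
        moreover have "c mod S < S" using S0 by simp
        ultimately show "q \<noteq> dec c" using False Pair unfolding dec_def by auto
      qed
      then have "(\<Sum>c\<in>{0..<N}. (if q = dec c then 1 else 0) * x $ c) = 0" by (intro sum.neutral) auto
      then show ?thesis unfolding pad_def using Pair False by auto
    qed
  qed
  have Ax: "(A *\<^sub>v x) $ r = (if dec r \<in> ipts n then Lop \<kappa> (pad x) (dec r) else x $ r)"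
    if x: "x \<in> carrier_vec N" and r: "r < N" for x r
  proof -
    have dx: "dim_vec x = N" using x by simp
    have "(A *\<^sub>v x) $ r = (\<Sum>c\<in>{0..<N}. A $$ (r,c) * x $ c)"
      using r Acar dx by (simp add: Matrix.scalar_prod_def)
    also have "\<dots> = (if dec r \<in> ipts n then Lop \<kappa> (pad x) (dec r) else x $ r)"
    proof (cases "dec r \<in> ipts n")
      case True
      have "(\<Sum>c\<in>{0..<N}. A $$ (r,c) * x $ c) = (\<Sum>c\<in>{0..<N}. Lop \<kappa> (\<lambda>q. (if q = dec c then 1 else 0) * x $ c) (dec r))"
        using r True unfolding A_def by (intro sum.cong) (auto simp: Lop_scale)
      also have "\<dots> = Lop \<kappa> (\<lambda>q. \<Sum>c\<in>{0..<N}. (if q = dec c then 1 else 0) * x $ c) (dec r)"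
        by (simp add: Lop_sum)
      also have "\<dots> = Lop \<kappa> (pad x) (dec r)" unfolding padsum ..
      finally show ?thesis using True by simp
    next
      case False
      have "(\<Sum>c\<in>{0..<N}. A $$ (r,c) * x $ c) = (\<Sum>c\<in>{0..<N}. if c = r then x $ c else 0)"
        using r False unfolding A_def by (intro sum.cong) auto
      also have "\<dots> = x $ r" using r by simp
      finally show ?thesis using False by simp
    qed
    finally show ?thesis .
  qed
  have inj: "v = 0\<^sub>v N" if v: "v \<in> carrier_vec N" and Av: "A *\<^sub>v v = 0\<^sub>v N" for v
  proof -
    have Avr: "(A *\<^sub>v v) $ r = 0" if "r < N" for r using Av that by simp
    have pb: "\<forall>p\<in>bdry_grid n. pad v p = 0"
    proof
      fix p assume p: "p \<in> bdry_grid n"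
      obtain K L where KL: "p = (K,L)" by force
      have b: "K < S" "L < S" using grid_bound[of K L n] p KL bdry_sub unfolding S_def by auto
      have ni: "p \<notin> ipts n" using p unfolding ipts_def by auto
      have "(A *\<^sub>v v) $ (K*S+L) = v $ (K*S+L)" using Ax[OF v idxN[OF b]] dec_idx[OF b(2)] ni KL by simp
      then show "pad v p = 0" using Avr[OF idxN[OF b]] KL b unfolding pad_def by simp
    qed
    have pi: "\<forall>p\<in>ipts n. Lop \<kappa> (pad v) p = 0"
    proof
      fix p assume p: "p \<in> ipts n"
      obtain K L where KL: "p = (K,L)" by force
      have b: "K < S" "L < S" using grid_bound[of K L n] p KL unfolding S_def ipts_def by auto
      show "Lop \<kappa> (pad v) p = 0" using Ax[OF v idxN[OF b]] dec_idx[OF b(2)] p KL Avr[OF idxN[OF b]] by simp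
    qed
    have z: "\<forall>p\<in>grid n. pad v p = 0" by (rule uniq_grid[OF k n pb pi])
    show ?thesis
    proof (rule eq_vecI)
      show "dim_vec v = dim_vec (0\<^sub>v N)" using v by simp
    next
      fix r assume "r < dim_vec (0\<^sub>v N)"
      then have r: "r < N" by simp
      show "v $ r = 0\<^sub>v N $ r"
      proof (cases "dec r \<in> ipts n")
        case True
        have rr: "r = (r div S) * S + r mod S" by simp
        have b: "r div S < S" "r mod S < S" using r S0 unfolding N_def by (auto simp: less_mult_imp_div_less)
        have "dec r \<in> grid n" using True unfolding ipts_def by auto
        then have "pad v (dec r) = 0" using z by auto
        then have "v $ r = 0" using b rr unfolding pad_def dec_def by simp
        then show ?thesis using r by simp
      next
        case False
        then show ?thesis using Ax[OF v r] Avr[OF r] r by simp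
      qed
    qed
  qed
  have "det A \<noteq> 0" using det_0_iff_vec_prod_zero_field[OF Acar] inj by blast
  then have "A \<in> Units (ring_mat TYPE(real) N ())" by (rule det_non_zero_imp_unit[OF Acar])
  then obtain B where Bc: "B \<in> carrier_mat N N" and AB: "A * B = 1\<^sub>m N"
    unfolding Units_def ring_mat_def by auto
  define x where "x = B *\<^sub>v b"
  have xc: "x \<in> carrier_vec N" unfolding x_def using Bc b_def by simp
  have Axb: "A *\<^sub>v x = b" unfolding x_def using Acar Bc AB b_def
    by (simp flip: assoc_mult_mat_vec)
  have "seven_point n \<kappa> f g (pad x)"
    unfolding seven_iff2
  proof (intro conjI ballI)
    fix p assume p: "p \<in> bdry_grid n"
    obtain K L where KL: "p = (K,L)" by force
    have bd: "K < S" "L < S" using grid_bound[of K L n] p KL bdry_sub unfolding S_def by auto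
    have ni: "p \<notin> ipts n" using p unfolding ipts_def by auto
    have "(A *\<^sub>v x) $ (K*S+L) = x $ (K*S+L)" using Ax[OF xc idxN[OF bd]] dec_idx[OF bd(2)] ni KL by simp
    moreover have "b $ (K*S+L) = Qb n g p" unfolding b_def using idxN[OF bd] dec_idx[OF bd(2)] ni KL p by simp
    ultimately show "pad x p = Qb n g p" using Axb KL bd unfolding pad_def by simp
  next
    fix p assume p: "p \<in> ipts n"
    obtain K L where KL: "p = (K,L)" by force
    have bd: "K < S" "L < S" using grid_bound[of K L n] p KL unfolding S_def ipts_def by auto
    have "(A *\<^sub>v x) $ (K*S+L) = Lop \<kappa> (pad x) p" using Ax[OF xc idxN[OF bd]] dec_idx[OF bd(2)] p KL by simp
    moreover have "b $ (K*S+L) = rhs n f p" unfolding b_def using idxN[OF bd] dec_idx[OF bd(2)] KL p by simp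
    ultimately show "Lop \<kappa> (pad x) p = rhs n f p" using Axb by simp
  qed
  then show ?thesis by blast
qed

lemma Lop_diff: "Lop \<kappa> (\<lambda>q. u q - u' q) p = Lop \<kappa> u p - Lop \<kappa> u' p"
  by (cases p) (simp add: Lop_def algebra_simps)

lemma coord_01:
  assumes "1 < K" "K < 2*n+1"
  shows "0 < coord n K \<and> coord n K < 1"
proof -
  have a: "real K > 1" "real K < 2*real n + 1" using assms by linarith+
  then have "real n > 0" by linarith
  then show ?thesis using a unfolding coord_def by (simp add: field_simps)
qed

lemma rhs_nonpos:
  assumes fneg: "\<forall>x y. 0 < x \<and> x < 1 \<and> 0 < y \<and> y < 1 \<longrightarrow> f (x, y) \<le> (0::real)"
    and p: "p \<in> ipts n"
  shows "rhs n f p \<le> 0"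
proof -
  obtain K L where KL: "p = (K, L)" "1 < K" "K < 2*n+1" "1 < L" "L < 2*n+1"
    by (rule ipts_cases[OF p]) auto
  have "f (coord n K, coord n L) \<le> 0" using fneg coord_01[OF KL(2,3)] coord_01[OF KL(4,5)] by blast
  then show ?thesis unfolding rhs_def KL(1) by (simp add: mult_nonneg_nonpos)
qed

lemma uniq7:
  assumes k: "\<kappa> > 0" and n: "n \<ge> 1"
    and u1: "u1 \<in> extensional (grid n)" "seven_point n \<kappa> f g u1"
    and u2: "u2 \<in> extensional (grid n)" "seven_point n \<kappa> f g u2"
  shows "u1 = u2"
proof -
  define w where "w = (\<lambda>q. u1 q - u2 q)"
  have b: "\<forall>p\<in>bdry_grid n. w p = 0" using u1(2) u2(2) unfolding seven_iff2 w_def by auto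
  have L: "\<forall>p\<in>ipts n. Lop \<kappa> w p = 0" using u1(2) u2(2) unfolding seven_iff2 w_def Lop_diff by auto
  have "\<forall>p\<in>grid n. w p = 0" by (rule uniq_grid[OF k n b L])
  then show ?thesis using u1(1) u2(1) unfolding w_def by (intro extensionalityI) auto
qed

lemma exist_ext:
  assumes k: "\<kappa> > 0" and n: "n \<ge> 1"
  shows "\<exists>u. u \<in> extensional (grid n) \<and> seven_point n \<kappa> f g u"
proof -
  obtain u where u: "seven_point n \<kappa> f g u" using exist[OF k n] by blast
  have "seven_point n \<kappa> f g (restrict u (grid n))" by (rule seven_local[OF u]) simp
  then show ?thesis by (intro exI[of _ "restrict u (grid n)"]) simp
qed

lemma max_bound:
  assumes k: "0 < \<kappa>" "\<kappa> \<le> 4" and n: "n \<ge> 1"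
    and fneg: "\<forall>x y. 0 < x \<and> x < 1 \<and> 0 < y \<and> y < 1 \<longrightarrow> f (x, y) \<le> 0"
    and u: "seven_point n \<kappa> f g u"
  shows "Max (u ` grid n) \<le> Max (Qb n g ` bdry_grid n)"
proof -
  have L: "\<forall>p\<in>ipts n. Lop \<kappa> u p \<le> 0" using u rhs_nonpos[OF fneg] unfolding seven_iff2 by auto
  obtain q where q: "q \<in> bdry_grid n" "\<forall>p\<in>grid n. u p \<le> u q" using maxp[OF k n L] by blast
  have ne: "grid n \<noteq> {}" using grid_v[of 0 n 1] n by auto
  have "Max (u ` grid n) \<le> u q" using q(2) finite_grid ne by (simp add: Max_le_iff)
  also have "u q = Qb n g q" using u q(1) unfolding seven_iff2 by auto
  also have "\<dots> \<le> Max (Qb n g ` bdry_grid n)" using q(1) finite_bdry by simp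
  finally show ?thesis .
qed

theorem theorem5p2:
  fixes n :: nat and f g :: "real \<times> real \<Rightarrow> real"
  assumes n2: "n \<ge> 2"
    and f_cont: "continuous_on (cbox (0,0) (1,1)) f"
    and g_bot: "(\<lambda>t. g (t, 0)) integrable_on {0..1}"
    and g_top: "(\<lambda>t. g (t, 1)) integrable_on {0..1}"
    and g_left: "(\<lambda>t. g (0, t)) integrable_on {0..1}"
    and g_right: "(\<lambda>t. g (1, t)) integrable_on {0..1}"
  shows "(\<forall>\<kappa>>0. \<exists>!u. u \<in> extensional (grid n) \<and> seven_point n \<kappa> f g u)
     \<and> (\<exists>!u. u \<in> extensional (grid n) \<and> five_point n f g u)
     \<and> ((\<forall>x y. 0 < x \<and> x < 1 \<and> 0 < y \<and> y < 1 \<longrightarrow> f (x, y) \<le> 0) \<longrightarrow>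
          (\<forall>\<kappa>. 0 < \<kappa> \<and> \<kappa> \<le> 4 \<longrightarrow> (\<forall>u. seven_point n \<kappa> f g u \<longrightarrow>
              Max (u ` grid n) \<le> Max (Qb n g ` bdry_grid n)))
        \<and> (\<forall>u. five_point n f g u \<longrightarrow> Max (u ` grid n) \<le> Max (Qb n g ` bdry_grid n)))"
proof -
  have n: "n \<ge> 1" using n2 by simp
  have P1: "\<forall>\<kappa>>0. \<exists>!u. u \<in> extensional (grid n) \<and> seven_point n \<kappa> f g u"
  proof (intro allI impI)
    fix \<kappa> :: real assume k: "\<kappa> > 0"
    show "\<exists>!u. u \<in> extensional (grid n) \<and> seven_point n \<kappa> f g u"
      using exist_ext[OF k n, of f g] uniq7[OF k n] by blast
  qed
  have P2: "\<exists>!u. u \<in> extensional (grid n) \<and> five_point n f g u"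
    using P1 five_iff[OF n, of f g] by (metis zero_less_numeral)
  have P3: "(\<forall>x y. 0 < x \<and> x < 1 \<and> 0 < y \<and> y < 1 \<longrightarrow> f (x, y) \<le> 0) \<longrightarrow>
          (\<forall>\<kappa>. 0 < \<kappa> \<and> \<kappa> \<le> 4 \<longrightarrow> (\<forall>u. seven_point n \<kappa> f g u \<longrightarrow>
              Max (u ` grid n) \<le> Max (Qb n g ` bdry_grid n)))
        \<and> (\<forall>u. five_point n f g u \<longrightarrow> Max (u ` grid n) \<le> Max (Qb n g ` bdry_grid n))"
  proof (intro impI)
    assume fneg: "\<forall>x y. 0 < x \<and> x < 1 \<and> 0 < y \<and> y < 1 \<longrightarrow> f (x, y) \<le> 0"
    have A: "\<forall>\<kappa>. 0 < \<kappa> \<and> \<kappa> \<le> 4 \<longrightarrow> (\<forall>u. seven_point n \<kappa> f g u \<longrightarrow>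
              Max (u ` grid n) \<le> Max (Qb n g ` bdry_grid n))"
      using max_bound[OF _ _ n fneg] by blast
    have B: "\<forall>u. five_point n f g u \<longrightarrow> Max (u ` grid n) \<le> Max (Qb n g ` bdry_grid n)"
      using max_bound[OF _ _ n fneg, of 4] five_iff[OF n, of f g] by simp
    show "(\<forall>\<kappa>. 0 < \<kappa> \<and> \<kappa> \<le> 4 \<longrightarrow> (\<forall>u. seven_point n \<kappa> f g u \<longrightarrow>
              Max (u ` grid n) \<le> Max (Qb n g ` bdry_grid n)))
        \<and> (\<forall>u. five_point n f g u \<longrightarrow> Max (u ` grid n) \<le> Max (Qb n g ` bdry_grid n))"
      using A B by blast
  qed
  show ?thesis using P1 P2 P3 by blast
qed

end
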